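(* Let $\lambda:[0,\infty)\to(0,\infty)$ be continuous, $n\ge2$, $\rho>0$, and let $\bar A^\rho(t)=(\bar K_{ab}(t),\bar K_a(t),\bar K_b(t),\bar R(t))$ be the ancestral process with limited recombination. Define $L^a(t)=\int_0^t\mathbb 1_{\{\bar K_{ab}(s)+\bar K_a(s)>1\}}(\bar K_{ab}(s)+\bar K_a(s))\,ds$, $L^b(t)=\int_0^t\mathbb 1_{\{\bar K_{ab}(s)+\bar K_b(s)>1\}}(\bar K_{ab}(s)+\bar K_b(s))\,ds$, $T^a=\inf\{t: \bar K_{ab}(t)+\bar K_a(t)\le1\}$, $T^b=\inf\{t:\bar K_{ab}(t)+\bar K_b(t)\le1\}$, $\mathcal L^a=L^a(T^a)$, $\mathcal L^b=L^b(T^b)$, and $F_s(t,x,y)=\mathbb P\{\bar A^\rho(t)=s,\,L^a(t)\le x,\,L^b(t)\le y\}$. Let $\Delta=\{(1,0,0,0),(1,0,0,1)\}$. Then for all $x,y\in[0,\infty)$ and all $\bar t\ge\max\{x,y\}/2$, \[ \mathbb P\{\mathcal L^a\le x,\,\mathcal L^b\le y\}=\mathbb P\{\bar A^\rho(\bar t)\in\Delta,\,L^a(\bar t)\le x,\,L^b(\bar t)\le y\}=F_{(1,0,0,0)}(\bar t,x,y)+F_{(1,0,0,1)}(\bar t,x,y). \]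
   Context: The ancestral process with limited recombination is the time-inhomogeneous Markov chain $\bar A^\rho(t)$ with initial state $(n,0,0,0)$ on the state space $\bar{\mathcal S}^\rho=\big(\{1,\dots,n\}\times\{(0,0,0)\}\cup\{1,\dots,n\}\times\{0,1\}\times\{0,1\}\times\{1\}\big)\setminus\{(n,1,1,1),(n,1,0,1),(n,0,1,1)\}$. A state $(k_{ab},k_a,k_b,r)$ records the numbers of lineages ancestral to both loci $a,b$, to locus $a$ only, to locus $b$ only, and the number $r\in\{0,1\}$ of recombination events so far. Its generator is $\bar Q(t)=\lambda(t)\bar Q^c+\bar Q^\rho$: coalescence transitions (rates multiplied by $\lambda(t)$, $r$ unchanged) are $(k_{ab},k_a,k_b,r)\to(k_{ab}-1,k_a,k_b,r)$ at rate $\binom{k_{ab}}2$, $\to(k_{ab},k_a-1,k_b,r)$ at rate $\binom{k_a}2+k_{ab}k_a$, $\to(k_{ab},k_a,k_b-1,r)$ at rate $\binom{k_b}2+k_{ab}k_b$, and $\to(k_{ab}+1,k_a-1,k_b-1,r)$ at rate $k_ak_b$; the only recombination transition is $(k_{ab},k_a,k_b,0)\to(k_{ab}-1,k_a+1,k_b+1,1)$ at rate $\frac{\rho}{2}k_{ab}$ (not multiplied by $\lambda$). The states $(1,0,0,0)$ and $(1,0,0,1)$ are absorbing, and diagonal entries are minus the sum of off-diagonal entries of the row. *)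

theory Defs
  imports "HOL-Probability.Probability"
begin

type_synonym st = "nat \<times> nat \<times> nat \<times> nat"
  (* (k_ab, k_a, k_b, r) *)

definition state_space :: "nat \<Rightarrow> st set" where
  "state_space n =
     ({1..n} \<times> {(0,0,0)} \<union> {1..n} \<times> {0,1} \<times> {0,1} \<times> {1})
     - {(n,1,1,1),(n,1,0,1),(n,0,1,1)}"

definition Delta :: "st set" where
  "Delta = {(1,0,0,0),(1,0,0,1)}"

definition coal_rate :: "st \<Rightarrow> st \<Rightarrow> real" where
  "coal_rate s s' = (case s of (kab,ka,kb,r) \<Rightarrow>
      (if s' = (kab - 1, ka, kb, r) then real (kab choose 2) else 0)
    + (if s' = (kab, ka - 1, kb, r) then real (ka choose 2) + real kab * real ka else 0)
    + (if s' = (kab, ka, kb - 1, r) then real (kb choose 2) + real kab * real kb else 0)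
    + (if s' = (kab + 1, ka - 1, kb - 1, r) then real ka * real kb else 0))"

definition rec_rate :: "real \<Rightarrow> st \<Rightarrow> st \<Rightarrow> real" where
  "rec_rate \<rho> s s' = (case s of (kab,ka,kb,r) \<Rightarrow>
      (if r = 0 \<and> s' = (kab - 1, ka + 1, kb + 1, 1) then \<rho> / 2 * real kab else 0))"

definition offdiag_rate :: "(real \<Rightarrow> real) \<Rightarrow> real \<Rightarrow> real \<Rightarrow> st \<Rightarrow> st \<Rightarrow> real" where
  "offdiag_rate lam \<rho> t s s' =
     (if s \<in> Delta then 0 else lam t * coal_rate s s' + rec_rate \<rho> s s')"

text \<open>The generator Q(t) = lambda(t) Q^c + Q^rho on the state space.\<close>
definition gen :: "(real \<Rightarrow> real) \<Rightarrow> real \<Rightarrow> nat \<Rightarrow> real \<Rightarrow> st \<Rightarrow> st \<Rightarrow> real" where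
  "gen lam \<rho> n t s s' =
     (if s' \<noteq> s then offdiag_rate lam \<rho> t s s'
      else - (\<Sum>u\<in>state_space n - {s}. offdiag_rate lam \<rho> t s u))"

text \<open>Transition probabilities P(s,t) solving Kolmogorov's forward equation
  d/dt P(s,t) = P(s,t) Q(t), P(s,s) = I (unique solution of a linear ODE).\<close>
definition transition_family ::
  "(real \<Rightarrow> real) \<Rightarrow> real \<Rightarrow> nat \<Rightarrow> (real \<Rightarrow> real \<Rightarrow> st \<Rightarrow> st \<Rightarrow> real) \<Rightarrow> bool" where
  "transition_family lam \<rho> n P \<longleftrightarrow>
     (\<forall>s\<ge>0. \<forall>i\<in>state_space n. \<forall>j\<in>state_space n.
        P s s i j = (if i = j then 1 else 0) \<and>
        (\<forall>t\<ge>s. ((\<lambda>u. P s u i j) has_real_derivative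
                   (\<Sum>k\<in>state_space n. P s t i k * gen lam \<rho> n t k j)) (at t within {s..})))"

text \<open>The ancestral process with limited recombination: a continuous-time
  Markov chain started at (n,0,0,0) with generator Q(t), with cadlag
  (piecewise constant) paths in the state space.\<close>
definition ancestral_process ::
  "'w measure \<Rightarrow> (real \<Rightarrow> real) \<Rightarrow> real \<Rightarrow> nat \<Rightarrow> (real \<Rightarrow> 'w \<Rightarrow> st) \<Rightarrow> bool" where
  "ancestral_process M lam \<rho> n X \<longleftrightarrow>
     (\<forall>t\<ge>0. X t \<in> measurable M (count_space UNIV)) \<and>
     (\<forall>\<omega>\<in>space M. \<forall>t\<ge>0. X t \<omega> \<in> state_space n) \<and>
     (\<forall>\<omega>\<in>space M. \<forall>t\<ge>0. \<exists>e>0. \<forall>u. t \<le> u \<and> u < t + e \<longrightarrow> X u \<omega> = X t \<omega>) \<and>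
     (\<forall>\<omega>\<in>space M. \<forall>t>0. \<exists>e>0. e \<le> t \<and> (\<forall>u v. t - e < u \<and> u < t \<and> t - e < v \<and> v < t
                                         \<longrightarrow> X u \<omega> = X v \<omega>)) \<and>
     (\<exists>P. transition_family lam \<rho> n P \<and>
        (\<forall>ts ss. length ts = length ss \<longrightarrow> ts \<noteq> [] \<longrightarrow> hd ts = 0 \<longrightarrow> sorted ts \<longrightarrow>
           set ss \<subseteq> state_space n \<longrightarrow>
           measure M {\<omega>\<in>space M. \<forall>i<length ts. X (ts ! i) \<omega> = ss ! i}
             = (if hd ss = (n,0,0,0) then 1 else 0) *
               (\<Prod>i<length ts - 1. P (ts ! i) (ts ! (i+1)) (ss ! i) (ss ! (i+1)))))"

definition kA :: "st \<Rightarrow> nat" where "kA s = fst s + fst (snd s)"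
definition kB :: "st \<Rightarrow> nat" where "kB s = fst s + fst (snd (snd s))"

definition Lfun :: "(st \<Rightarrow> nat) \<Rightarrow> (real \<Rightarrow> 'w \<Rightarrow> st) \<Rightarrow> real \<Rightarrow> 'w \<Rightarrow> real" where
  "Lfun k X t \<omega> = (LINT s:{0..t}|lborel. (if k (X s \<omega>) > 1 then real (k (X s \<omega>)) else 0))"

text \<open>T = inf{t : k(A(t)) \<le> 1} (extended real; inf of the empty set is \<infinity>).\<close>
definition hit :: "(st \<Rightarrow> nat) \<Rightarrow> (real \<Rightarrow> 'w \<Rightarrow> st) \<Rightarrow> 'w \<Rightarrow> ereal" where
  "hit k X \<omega> = Inf {ereal t | t. 0 \<le> t \<and> k (X t \<omega>) \<le> 1}"

text \<open>\<L> = L(T); if T = \<infinity> this is read as lim_{t\<rightarrow>\<infinity>} L(t).\<close>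
definition Ltot :: "(st \<Rightarrow> nat) \<Rightarrow> (real \<Rightarrow> 'w \<Rightarrow> st) \<Rightarrow> 'w \<Rightarrow> ereal" where
  "Ltot k X \<omega> = (if hit k X \<omega> = \<infinity> then (SUP t\<in>{0..}. ereal (Lfun k X t \<omega>))
                  else ereal (Lfun k X (real_of_ereal (hit k X \<omega>)) \<omega>))"

definition Fs :: "'w measure \<Rightarrow> (real \<Rightarrow> 'w \<Rightarrow> st) \<Rightarrow> st \<Rightarrow> real \<Rightarrow> real \<Rightarrow> real \<Rightarrow> real" where
  "Fs M X s t x y = measure M {\<omega>\<in>space M. X t \<omega> = s \<and> Lfun kA X t \<omega> \<le> x \<and> Lfun kB X t \<omega> \<le> y}"

end

theory Submission
  imports Defs
begin

lemma finite_state_space: "finite (state_space n)"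
  unfolding state_space_def by auto

lemma coal_rate_nonneg: "coal_rate s s' \<ge> 0"
  unfolding coal_rate_def by (simp split: prod.split)

lemma rec_rate_nonneg: "\<rho> \<ge> 0 \<Longrightarrow> rec_rate \<rho> s s' \<ge> 0"
  unfolding rec_rate_def by (simp split: prod.split)

lemma offdiag_nonneg: "lam t \<ge> 0 \<Longrightarrow> \<rho> \<ge> 0 \<Longrightarrow> offdiag_rate lam \<rho> t s s' \<ge> 0"
  unfolding offdiag_rate_def using coal_rate_nonneg rec_rate_nonneg
  by (simp add: add_nonneg_nonneg)

lemma gen_row_sum:
  assumes "k \<in> state_space n"
  shows "(\<Sum>j\<in>state_space n. gen lam \<rho> n t k j) = 0"
proof -
  have "(\<Sum>j\<in>state_space n. gen lam \<rho> n t k j)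
      = gen lam \<rho> n t k k + (\<Sum>j\<in>state_space n - {k}. gen lam \<rho> n t k j)"
    using assms finite_state_space by (simp add: sum.remove)
  also have "(\<Sum>j\<in>state_space n - {k}. gen lam \<rho> n t k j)
      = (\<Sum>j\<in>state_space n - {k}. offdiag_rate lam \<rho> t k j)"
    by (rule sum.cong) (auto simp: gen_def)
  finally show ?thesis by (simp add: gen_def)
qed

lemma gen_closed_sum:
  assumes "C \<subseteq> state_space n" "k \<in> C"
    and cl: "\<And>j. j \<in> state_space n - C \<Longrightarrow> offdiag_rate lam \<rho> t k j = 0"
  shows "(\<Sum>j\<in>C. gen lam \<rho> n t k j) = 0"
proof -
  have fC: "finite C" using assms(1) finite_state_space finite_subset by blast
  have "(\<Sum>j\<in>C. gen lam \<rho> n t k j) = gen lam \<rho> n t k k + (\<Sum>j\<in>C - {k}. gen lam \<rho> n t k j)"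
    using assms fC by (simp add: sum.remove)
  also have "(\<Sum>j\<in>C - {k}. gen lam \<rho> n t k j) = (\<Sum>j\<in>C - {k}. offdiag_rate lam \<rho> t k j)"
    by (rule sum.cong) (auto simp: gen_def)
  also have "gen lam \<rho> n t k k = - (\<Sum>j\<in>state_space n - {k}. offdiag_rate lam \<rho> t k j)"
    by (simp add: gen_def)
  also have "(\<Sum>j\<in>state_space n - {k}. offdiag_rate lam \<rho> t k j)
     = (\<Sum>j\<in>(state_space n - {k}) - (C - {k}). offdiag_rate lam \<rho> t k j) + (\<Sum>j\<in>C - {k}. offdiag_rate lam \<rho> t k j)"
    using assms finite_state_space by (intro sum.subset_diff) auto
  also have "(\<Sum>j\<in>(state_space n - {k}) - (C - {k}). offdiag_rate lam \<rho> t k j) = 0"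
    using cl by (intro sum.neutral) auto
  finally show ?thesis by simp
qed

lemma gen_out_sum:
  assumes "C \<subseteq> state_space n" "k \<notin> C" "lam t \<ge> 0" "\<rho> \<ge> 0"
  shows "(\<Sum>j\<in>C. gen lam \<rho> n t k j) \<ge> 0"
proof -
  have "(\<Sum>j\<in>C. gen lam \<rho> n t k j) = (\<Sum>j\<in>C. offdiag_rate lam \<rho> t k j)"
    using assms by (intro sum.cong) (auto simp: gen_def)
  also have "\<dots> \<ge> 0" using offdiag_nonneg assms by (intro sum_nonneg) auto
  finally show ?thesis .
qed

lemma mono_deriv:
  fixes f f' :: "real \<Rightarrow> real"
  assumes d: "\<And>t. t \<ge> s \<Longrightarrow> (f has_real_derivative f' t) (at t within {s..})"
    and nn: "\<And>t. t \<ge> s \<Longrightarrow> f' t \<ge> 0" and sa: "s \<le> a" and ab: "a \<le> b"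
  shows "f a \<le> f b"
proof (rule DERIV_nonneg_imp_increasing_open[OF ab])
  fix x assume x: "a < x" "x < b"
  have sx: "s \<le> x" using x sa by linarith
  have sub: "{s<..} \<subseteq> {s..}" by auto
  have "(f has_real_derivative f' x) (at x within {s<..})"
    by (rule has_field_derivative_subset[OF d[OF sx] sub])
  moreover have "at x within {s<..} = at x"
    by (rule at_within_open) (use x sa in auto)
  ultimately have "(f has_real_derivative f' x) (at x)" by simp
  then show "\<exists>y. (f has_real_derivative y) (at x) \<and> 0 \<le> y" using nn[OF sx] by blast
next
  have "continuous_on {s..} f"
    unfolding continuous_on_eq_continuous_within
  proof
    fix x :: real assume "x \<in> {s..}"
    then show "continuous (at x within {s..}) f" by (intro DERIV_continuous[OF d]) simp
  qed
  then show "continuous_on {a..b} f" by (rule continuous_on_subset) (use sa in auto)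
qed

lemma const_deriv:
  fixes f :: "real \<Rightarrow> real"
  assumes d: "\<And>t. t \<ge> s \<Longrightarrow> (f has_real_derivative 0) (at t within {s..})"
    and sa: "s \<le> a"
  shows "f a = f s"
proof -
  have nn0: "\<And>t::real. s \<le> t \<Longrightarrow> (0::real) \<le> (\<lambda>_::real. 0::real) t" by simp
  have "f s \<le> f a" using mono_deriv[of s f "\<lambda>_::real. 0::real", OF d nn0 order.refl sa] by simp
  moreover have "(\<lambda>x. - f x) s \<le> (\<lambda>x. - f x) a"
    by (rule mono_deriv[of s _ "\<lambda>_::real. 0::real", OF _ _ order.refl sa])
       (use DERIV_minus[OF d] nn0 in auto)
  ultimately show ?thesis by simp
qed

lemma no_escape:
  fixes P :: "real \<Rightarrow> real \<Rightarrow> st \<Rightarrow> st \<Rightarrow> real" and p :: "st \<Rightarrow> real"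
  assumes tf: "transition_family lam \<rho> n P"
    and lam: "\<And>t. t \<ge> 0 \<Longrightarrow> lam t \<ge> 0" and rho: "\<rho> \<ge> 0" and s: "s \<ge> 0"
    and CS: "C \<subseteq> state_space n"
    and cl: "\<And>t k j. k \<in> C \<Longrightarrow> j \<in> state_space n - C \<Longrightarrow> offdiag_rate lam \<rho> t k j = 0"
    and nn: "\<And>a k t. a \<in> C \<Longrightarrow> k \<in> state_space n \<Longrightarrow> t \<ge> s \<Longrightarrow> p a * P s t a k \<ge> 0"
    and i: "i \<in> C" and j: "j \<in> state_space n - C" and t: "t \<ge> s"
  shows "p i * P s t i j = 0"
proof -
  let ?S = "state_space n"
  have fS: "finite ?S" by (rule finite_state_space)
  have fC: "finite C" using CS fS finite_subset by blast
  have init: "\<And>a b. a\<in>?S \<Longrightarrow> b\<in>?S \<Longrightarrow> P s s a b = (if a = b then 1 else 0)"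
    using tf s unfolding transition_family_def by blast
  have der: "\<And>a b u. a\<in>?S \<Longrightarrow> b\<in>?S \<Longrightarrow> u \<ge> s \<Longrightarrow>
     ((\<lambda>v. P s v a b) has_real_derivative (\<Sum>k\<in>?S. P s u a k * gen lam \<rho> n u k b)) (at u within {s..})"
    using tf s unfolding transition_family_def by blast
  have rowsum: "(\<Sum>b\<in>?S. P s u a b) = 1" if a: "a \<in> ?S" and u: "u \<ge> s" for a u
  proof -
    have "(\<Sum>b\<in>?S. P s u a b) = (\<Sum>b\<in>?S. P s s a b)"
    proof (rule const_deriv[of s "\<lambda>v. \<Sum>b\<in>?S. P s v a b", OF _ u])
      fix v assume v: "v \<ge> s"
      have "((\<lambda>v. \<Sum>b\<in>?S. P s v a b) has_real_derivative
             (\<Sum>b\<in>?S. \<Sum>k\<in>?S. P s v a k * gen lam \<rho> n v k b)) (at v within {s..})"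
        by (rule DERIV_sum) (use der a v in auto)
      moreover have "(\<Sum>b\<in>?S. \<Sum>k\<in>?S. P s v a k * gen lam \<rho> n v k b) = 0"
      proof -
        have "(\<Sum>b\<in>?S. \<Sum>k\<in>?S. P s v a k * gen lam \<rho> n v k b)
             = (\<Sum>k\<in>?S. \<Sum>b\<in>?S. P s v a k * gen lam \<rho> n v k b)"
          by (rule sum.swap)
        also have "\<dots> = (\<Sum>k\<in>?S. P s v a k * (\<Sum>b\<in>?S. gen lam \<rho> n v k b))"
          by (simp add: sum_distrib_left)
        also have "\<dots> = 0" by (simp add: gen_row_sum)
        finally show ?thesis .
      qed
      ultimately show "((\<lambda>v. \<Sum>b\<in>?S. P s v a b) has_real_derivative 0) (at v within {s..})"
        by simp
    qed
    also have "\<dots> = (\<Sum>b\<in>?S. if a = b then 1 else 0)"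
      by (rule sum.cong) (simp_all add: init a)
    also have "\<dots> = 1" using a fS by simp
    finally show ?thesis .
  qed
  define F where "F u = (\<Sum>a\<in>C. p a * (\<Sum>b\<in>C. P s u a b))" for u
  define F' where "F' u = (\<Sum>k\<in>?S. (\<Sum>a\<in>C. p a * P s u a k) * (\<Sum>b\<in>C. gen lam \<rho> n u k b))" for u
  have Fd: "(F has_real_derivative F' u) (at u within {s..})" if u: "u \<ge> s" for u
  proof -
    have "(F has_real_derivative (\<Sum>a\<in>C. p a * (\<Sum>b\<in>C. \<Sum>k\<in>?S. P s u a k * gen lam \<rho> n u k b)))
            (at u within {s..})"
      unfolding F_def using CS u by (auto intro!: DERIV_sum DERIV_cmult der)
    moreover have "(\<Sum>a\<in>C. p a * (\<Sum>b\<in>C. \<Sum>k\<in>?S. P s u a k * gen lam \<rho> n u k b)) = F' u"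
    proof -
      have "(\<Sum>a\<in>C. p a * (\<Sum>b\<in>C. \<Sum>k\<in>?S. P s u a k * gen lam \<rho> n u k b))
          = (\<Sum>a\<in>C. \<Sum>b\<in>C. \<Sum>k\<in>?S. p a * P s u a k * gen lam \<rho> n u k b)"
        by (simp add: sum_distrib_left mult.assoc)
      also have "\<dots> = (\<Sum>a\<in>C. \<Sum>k\<in>?S. \<Sum>b\<in>C. p a * P s u a k * gen lam \<rho> n u k b)"
        by (rule sum.cong[OF refl], rule sum.swap)
      also have "\<dots> = (\<Sum>k\<in>?S. \<Sum>a\<in>C. \<Sum>b\<in>C. p a * P s u a k * gen lam \<rho> n u k b)"
        by (rule sum.swap)
      also have "\<dots> = F' u"
        unfolding F'_def by (simp add: sum_product mult.assoc)
      finally show ?thesis .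
    qed
    ultimately show ?thesis by simp
  qed
  have F'nn: "F' u \<ge> 0" if u: "u \<ge> s" for u
    unfolding F'_def
  proof (rule sum_nonneg)
    fix k assume k: "k \<in> ?S"
    have "(\<Sum>a\<in>C. p a * P s u a k) \<ge> 0" using nn k u by (intro sum_nonneg) auto
    moreover have "(\<Sum>b\<in>C. gen lam \<rho> n u k b) \<ge> 0"
    proof (cases "k \<in> C")
      case True
      then show ?thesis using gen_closed_sum[OF CS True, of lam \<rho> u] cl by simp
    next
      case False
      then show ?thesis using gen_out_sum[OF CS False] lam[of u] u s rho by simp
    qed
    ultimately show "(\<Sum>a\<in>C. p a * P s u a k) * (\<Sum>b\<in>C. gen lam \<rho> n u k b) \<ge> 0" by simp
  qed
  have "F s \<le> F t" by (rule mono_deriv[OF Fd F'nn]) (use t in auto)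
  moreover have "F s = (\<Sum>a\<in>C. p a)"
  proof -
    have "F s = (\<Sum>a\<in>C. p a * (\<Sum>b\<in>C. if a = b then 1 else 0))"
      unfolding F_def
    proof (intro sum.cong refl arg_cong2[where f="(*)"])
      fix a b assume "a \<in> C" "b \<in> C"
      then show "P s s a b = (if a = b then 1 else 0)" using CS init by blast
    qed
    also have "\<dots> = (\<Sum>a\<in>C. p a)" using fC by simp
    finally show ?thesis .
  qed
  moreover have "(\<Sum>a\<in>C. \<Sum>b\<in>?S - C. p a * P s t a b) = (\<Sum>a\<in>C. p a) - F t"
  proof -
    have "(\<Sum>a\<in>C. \<Sum>b\<in>?S - C. p a * P s t a b) = (\<Sum>a\<in>C. p a * ((\<Sum>b\<in>?S. P s t a b) - (\<Sum>b\<in>C. P s t a b)))"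
      using CS fS by (intro sum.cong refl) (simp add: sum_distrib_left[symmetric] sum_diff)
    also have "\<dots> = (\<Sum>a\<in>C. p a * (1 - (\<Sum>b\<in>C. P s t a b)))"
      using CS t by (intro sum.cong refl) (auto simp: rowsum)
    also have "\<dots> = (\<Sum>a\<in>C. p a) - F t"
      unfolding F_def by (simp add: right_diff_distrib sum_subtractf)
    finally show ?thesis .
  qed
  ultimately have le: "(\<Sum>a\<in>C. \<Sum>b\<in>?S - C. p a * P s t a b) \<le> 0" by simp
  have nn2: "\<And>a b. a \<in> C \<Longrightarrow> b \<in> ?S - C \<Longrightarrow> p a * P s t a b \<ge> 0" using nn t by auto
  have "(\<Sum>a\<in>C. \<Sum>b\<in>?S - C. p a * P s t a b) \<ge> 0" using nn2 by (intro sum_nonneg) auto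
  with le have "(\<Sum>a\<in>C. \<Sum>b\<in>?S - C. p a * P s t a b) = 0" by simp
  then have "\<forall>a\<in>C. (\<Sum>b\<in>?S - C. p a * P s t a b) = 0"
    using fC nn2 by (subst (asm) sum_nonneg_eq_0_iff) (auto intro: sum_nonneg)
  then have "(\<Sum>b\<in>?S - C. p i * P s t i b) = 0" using i by blast
  then have "\<forall>b\<in>?S - C. p i * P s t i b = 0"
    using fS nn2 i by (subst (asm) sum_nonneg_eq_0_iff) auto
  then show ?thesis using j by blast
qed

definition rcont :: "(real \<Rightarrow> st) \<Rightarrow> bool" where
  "rcont x \<longleftrightarrow> (\<forall>t\<ge>0. \<exists>e>0. \<forall>u. t \<le> u \<and> u < t + e \<longrightarrow> x u = x t)"

lemma ap_meas: "ancestral_process M lam \<rho> n X \<Longrightarrow> t \<ge> 0 \<Longrightarrow> X t \<in> measurable M (count_space UNIV)"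
  unfolding ancestral_process_def by blast

lemma ap_in: "ancestral_process M lam \<rho> n X \<Longrightarrow> \<omega> \<in> space M \<Longrightarrow> t \<ge> 0 \<Longrightarrow> X t \<omega> \<in> state_space n"
  unfolding ancestral_process_def by blast

lemma ap_rcont: "ancestral_process M lam \<rho> n X \<Longrightarrow> \<omega> \<in> space M \<Longrightarrow> rcont (\<lambda>t. X t \<omega>)"
  unfolding ancestral_process_def rcont_def by blast

lemma ap_pred: "ancestral_process M lam \<rho> n X \<Longrightarrow> t \<ge> 0 \<Longrightarrow> Measurable.pred M (\<lambda>\<omega>. Q (X t \<omega>))"
  by (rule measurable_compose[OF ap_meas measurable_count_space])

lemma ap_fdd:
  assumes ap: "ancestral_process M lam \<rho> n X" and n: "n \<ge> 1"
  obtains P where "transition_family lam \<rho> n P"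
    and "measure M {\<omega>\<in>space M. X 0 \<omega> = (n,0,0,0)} = 1"
    and "\<And>s t i j. 0 \<le> s \<Longrightarrow> s \<le> t \<Longrightarrow> i \<in> state_space n \<Longrightarrow> j \<in> state_space n \<Longrightarrow>
          measure M {\<omega>\<in>space M. X 0 \<omega> = (n,0,0,0) \<and> X s \<omega> = i \<and> X t \<omega> = j}
            = P 0 s (n,0,0,0) i * P s t i j"
proof -
  obtain P where tf: "transition_family lam \<rho> n P" and
    fd: "\<And>ts ss. length ts = length ss \<Longrightarrow> ts \<noteq> [] \<Longrightarrow> hd ts = 0 \<Longrightarrow> sorted ts \<Longrightarrow>
           set ss \<subseteq> state_space n \<Longrightarrow>
           measure M {\<omega>\<in>space M. \<forall>i<length ts. X (ts ! i) \<omega> = ss ! i}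
             = (if hd ss = (n,0,0,0) then 1 else 0) *
               (\<Prod>i<length ts - 1. P (ts ! i) (ts ! (i+1)) (ss ! i) (ss ! (i+1)))"
    using ap unfolding ancestral_process_def by blast
  have n0: "(n,0,0,0) \<in> state_space n" using n unfolding state_space_def by auto
  have "measure M {\<omega>\<in>space M. X 0 \<omega> = (n,0,0,0)} = 1"
    using fd[of "[0]" "[(n,0,0,0)]"] n0 by simp
  moreover have "measure M {\<omega>\<in>space M. X 0 \<omega> = (n,0,0,0) \<and> X s \<omega> = i \<and> X t \<omega> = j}
            = P 0 s (n,0,0,0) i * P s t i j"
    if "0 \<le> s" "s \<le> t" "i \<in> state_space n" "j \<in> state_space n" for s t i j
  proof -
    have "{\<omega>\<in>space M. X 0 \<omega> = (n,0,0,0) \<and> X s \<omega> = i \<and> X t \<omega> = j}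
        = {\<omega>\<in>space M. \<forall>k<length [0,s,t]. X ([0,s,t] ! k) \<omega> = [(n,0,0,0),i,j] ! k}"
      by (auto simp: less_Suc_eq numeral_eq_Suc)
    also have "measure M \<dots> = P 0 s (n,0,0,0) i * P s t i j"
      using fd[of "[0,s,t]" "[(n,0,0,0),i,j]"] that n0 by (simp add: numeral_eq_Suc)
    finally show ?thesis .
  qed
  ultimately show ?thesis using tf that by blast
qed

lemma ap_no_escape:
  assumes ap: "ancestral_process M lam \<rho> n X" and prob: "prob_space M" and n: "n \<ge> 1"
    and lam: "\<forall>t\<ge>0. lam t > 0" and rho: "\<rho> > 0"
    and CS: "C \<subseteq> state_space n"
    and cl: "\<And>t k j. k \<in> C \<Longrightarrow> j \<in> state_space n - C \<Longrightarrow> offdiag_rate lam \<rho> t k j = 0"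
    and s: "0 \<le> s" and st: "s \<le> t"
  shows "AE \<omega> in M. X s \<omega> \<in> C \<longrightarrow> X t \<omega> \<in> C"
proof -
  let ?S = "state_space n"
  let ?n0 = "(n,0,0,0) :: st"
  obtain P where tf: "transition_family lam \<rho> n P"
    and f1: "measure M {\<omega>\<in>space M. X 0 \<omega> = ?n0} = 1"
    and f3: "\<And>s t i j. 0 \<le> s \<Longrightarrow> s \<le> t \<Longrightarrow> i \<in> ?S \<Longrightarrow> j \<in> ?S \<Longrightarrow>
          measure M {\<omega>\<in>space M. X 0 \<omega> = ?n0 \<and> X s \<omega> = i \<and> X t \<omega> = j}
            = P 0 s ?n0 i * P s t i j"
    using ap_fdd[OF ap n] by blast
  define A where "A p = {\<omega>\<in>space M. X 0 \<omega> = ?n0 \<and> X s \<omega> = fst p \<and> X t \<omega> = snd p}" for p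
  have Asets: "A p \<in> sets M" for p
  proof -
    have p0: "Measurable.pred M (\<lambda>\<omega>. X 0 \<omega> = ?n0)" by (rule ap_pred[OF ap]) simp
    have p1: "Measurable.pred M (\<lambda>\<omega>. X s \<omega> = fst p)" by (rule ap_pred[OF ap]) (use s in simp)
    have p2: "Measurable.pred M (\<lambda>\<omega>. X t \<omega> = snd p)" by (rule ap_pred[OF ap]) (use s st in simp)
    show ?thesis unfolding A_def
      by (rule predE, rule pred_intros_logic(3)[OF p0 pred_intros_logic(3)[OF p1 p2]])
  qed
  have z: "measure M (A (i,j)) = 0" if ij: "i \<in> C" "j \<in> ?S - C" for i j
  proof -
    have "P 0 s ?n0 i * P s t i j = 0"
    proof (rule no_escape[OF tf _ _ s CS cl, of "\<lambda>i. P 0 s ?n0 i"])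
      show "\<And>t. 0 \<le> t \<Longrightarrow> 0 \<le> lam t" using lam by (simp add: less_imp_le)
      show "0 \<le> \<rho>" using rho by simp
      fix a k u assume aC: "a \<in> C" and kS: "k \<in> ?S" and su: "s \<le> u"
      have aS: "a \<in> ?S" using CS aC by blast
      have e: "measure M {\<omega>\<in>space M. X 0 \<omega> = ?n0 \<and> X s \<omega> = a \<and> X u \<omega> = k} = P 0 s ?n0 a * P s u a k"
        by (rule f3[OF s su aS kS])
      have "0 \<le> measure M {\<omega>\<in>space M. X 0 \<omega> = ?n0 \<and> X s \<omega> = a \<and> X u \<omega> = k}"
        by (rule measure_nonneg)
      then show "0 \<le> P 0 s ?n0 a * P s u a k" by (simp only: e)
    qed (use ij st in auto)
    moreover have "measure M {\<omega>\<in>space M. X 0 \<omega> = ?n0 \<and> X s \<omega> = i \<and> X t \<omega> = j} = P 0 s ?n0 i * P s t i j"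
      by (rule f3) (use ij CS s st in auto)
    ultimately show ?thesis unfolding A_def by simp
  qed
  have AE0: "AE \<omega> in M. X 0 \<omega> = ?n0"
    using prob_space.AE_prob_1[OF prob f1] by (auto elim: eventually_mono)
  have AEp: "AE \<omega> in M. \<forall>p\<in>C \<times> (?S - C). \<omega> \<notin> A p"
  proof (rule AE_finite_allI)
    have "finite C" by (rule finite_subset[OF CS finite_state_space])
    then show "finite (C \<times> (?S - C))" using finite_state_space by simp
    fix p assume p: "p \<in> C \<times> (?S - C)"
    then obtain i j where pij: "p = (i,j)" "i \<in> C" "j \<in> ?S - C" by auto
    have "measure M (space M - A p) = 1"
      using prob_space.prob_compl[OF prob Asets[of p]] z[of i j] pij by simp
    then have "AE \<omega> in M. \<omega> \<in> space M - A p" by (rule prob_space.AE_prob_1[OF prob])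
    then show "AE \<omega> in M. \<omega> \<notin> A p" by (auto elim: eventually_mono)
  qed
  show ?thesis using AE0 AEp AE_space
  proof eventually_elim
    case (elim \<omega>)
    show ?case
    proof
      assume sC: "X s \<omega> \<in> C"
      show "X t \<omega> \<in> C"
      proof (rule ccontr)
        assume "X t \<omega> \<notin> C"
        then have "(X s \<omega>, X t \<omega>) \<in> C \<times> (?S - C)" using sC ap_in[OF ap elim(3)] s st by auto
        moreover have "\<omega> \<in> A (X s \<omega>, X t \<omega>)" unfolding A_def using elim by auto
        ultimately show False using elim(2) by blast
      qed
    qed
  qed
qed

lemma rcont_closed:
  assumes rc: "rcont x"
    and q: "\<And>r1 r2. r1 \<in> \<rat> \<Longrightarrow> r2 \<in> \<rat> \<Longrightarrow> 0 \<le> r1 \<Longrightarrow> r1 \<le> r2 \<Longrightarrow> x r1 \<in> C \<Longrightarrow> x r2 \<in> C"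
    and ab: "0 \<le> a" "a \<le> b" and xa: "x a \<in> C"
  shows "x b \<in> C"
proof (cases "a = b")
  case True then show ?thesis using xa by simp
next
  case False
  then have ab': "a < b" using ab by simp
  obtain ea where ea: "ea > 0" "\<And>u. a \<le> u \<Longrightarrow> u < a + ea \<Longrightarrow> x u = x a"
    using rc ab unfolding rcont_def by blast
  obtain eb where eb: "eb > 0" "\<And>u. b \<le> u \<Longrightarrow> u < b + eb \<Longrightarrow> x u = x b"
  proof -
    have "0 \<le> b" using ab by linarith
    then show ?thesis using that rc unfolding rcont_def by blast
  qed
  obtain r1 where r1: "r1 \<in> \<rat>" "a < r1" "r1 < min (a + ea) b"
    using Rats_dense_in_real[of a "min (a + ea) b"] ab' ea by auto
  obtain r2 where r2: "r2 \<in> \<rat>" "b < r2" "r2 < b + eb"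
    using Rats_dense_in_real[of b "b + eb"] eb by auto
  have "x r1 \<in> C" using ea(2)[of r1] r1 xa by simp
  then have "x r2 \<in> C" using q[OF r1(1) r2(1)] r1 r2 ab by simp
  then show ?thesis using eb(2)[of r2] r2 by simp
qed

lemma ap_closed_AE:
  assumes ap: "ancestral_process M lam \<rho> n X" and prob: "prob_space M" and n: "n \<ge> 1"
    and lam: "\<forall>t\<ge>0. lam t > 0" and rho: "\<rho> > 0"
    and CS: "C \<subseteq> state_space n"
    and cl: "\<And>t k j. k \<in> C \<Longrightarrow> j \<in> state_space n - C \<Longrightarrow> offdiag_rate lam \<rho> t k j = 0"
  shows "AE \<omega> in M. \<forall>a b. 0 \<le> a \<longrightarrow> a \<le> b \<longrightarrow> X a \<omega> \<in> C \<longrightarrow> X b \<omega> \<in> C"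
proof -
  have "AE \<omega> in M. \<forall>q1 q2 :: rat. 0 \<le> real_of_rat q1 \<longrightarrow> real_of_rat q1 \<le> real_of_rat q2 \<longrightarrow>
          X (real_of_rat q1) \<omega> \<in> C \<longrightarrow> X (real_of_rat q2) \<omega> \<in> C"
    unfolding AE_all_countable
  proof (intro allI)
    fix q1 q2 :: rat
    show "AE \<omega> in M. 0 \<le> real_of_rat q1 \<longrightarrow> real_of_rat q1 \<le> real_of_rat q2 \<longrightarrow>
          X (real_of_rat q1) \<omega> \<in> C \<longrightarrow> X (real_of_rat q2) \<omega> \<in> C"
    proof (cases "0 \<le> real_of_rat q1 \<and> real_of_rat q1 \<le> real_of_rat q2")
      case True
      then show ?thesis using ap_no_escape[OF ap prob n lam rho CS cl, of "real_of_rat q1" "real_of_rat q2"]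
        by (auto elim: eventually_mono)
    next
      case False
      then show ?thesis by auto
    qed
  qed
  then show ?thesis using AE_space
  proof eventually_elim
    case (elim \<omega>)
    show ?case
    proof (intro allI impI)
      fix a b :: real assume ab: "0 \<le> a" "a \<le> b" and xa: "X a \<omega> \<in> C"
      show "X b \<omega> \<in> C"
      proof (rule rcont_closed[OF ap_rcont[OF ap elim(2)] _ ab, simplified, OF _ xa])
        fix r1 r2 :: real assume "r1 \<in> \<rat>" "r2 \<in> \<rat>" "0 \<le> r1" "r1 \<le> r2" "X r1 \<omega> \<in> C"
        then show "X r2 \<omega> \<in> C" using elim(1) by (auto elim!: Rats_cases)
      qed
    qed
  qed
qed

lemma ceil_approx:
  fixes u e :: real
  assumes "0 \<le> u" "e > 0"
  shows "\<exists>N. \<forall>m\<ge>N. u \<le> real_of_int \<lceil>u * 2^m\<rceil> / 2^m \<and> real_of_int \<lceil>u * 2^m\<rceil> / 2^m < u + e"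
proof -
  obtain N where N: "(1/2::real)^N < e" using real_arch_pow_inv[of e "1/2"] assms by auto
  have "u \<le> real_of_int \<lceil>u * 2^m\<rceil> / 2^m \<and> real_of_int \<lceil>u * 2^m\<rceil> / 2^m < u + e" if m: "m \<ge> N" for m :: nat
  proof -
    have c: "real_of_int \<lceil>u * 2^m\<rceil> - 1 < u * 2^m" "u * 2^m \<le> real_of_int \<lceil>u * 2^m\<rceil>"
      using ceiling_correct[of "u * 2^m"] by auto
    have p: "(0::real) < 2^m" by simp
    have "(1/2::real)^m \<le> (1/2)^N" using m by (intro power_decreasing) auto
    then have "1 / 2^m < e" using N by (simp add: power_one_over)
    moreover have "real_of_int \<lceil>u * 2^m\<rceil> / 2^m < u + 1 / 2^m"
      using c(1) p by (simp add: field_simps)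
    moreover have "u \<le> real_of_int \<lceil>u * 2^m\<rceil> / 2^m"
      using c(2) p by (simp add: field_simps)
    ultimately show ?thesis by linarith
  qed
  then show ?thesis by blast
qed

lemma joint_meas:
  fixes g :: "st \<Rightarrow> real"
  assumes ap: "ancestral_process M lam \<rho> n X"
  shows "(\<lambda>p. if 0 \<le> snd p then g (X (snd p) (fst p)) else 0) \<in> borel_measurable (M \<Otimes>\<^sub>M lborel)"
proof (rule borel_measurable_LIMSEQ_real[where u="\<lambda>m p. if 0 \<le> snd p then g (X (max 0 (real_of_int \<lceil>(snd p::real) * 2^m\<rceil> / 2^m)) (fst p)) else 0"])
  fix m :: nat
  define F where "F k p = (if 0 \<le> snd p then g (X (max 0 (real_of_int k / 2^m)) (fst p)) else 0)" for k :: int and p :: "'a \<times> real"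
  have "(\<lambda>p. F (\<lceil>(snd p::real) * 2^m\<rceil>) p) \<in> borel_measurable (M \<Otimes>\<^sub>M lborel)"
  proof (rule measurable_compose_countable)
    fix k :: int
    have m1: "(\<lambda>p. g (X (max 0 (real_of_int k / 2^m)) (fst p))) \<in> borel_measurable (M \<Otimes>\<^sub>M lborel)"
      by (rule measurable_compose[OF measurable_compose[OF measurable_fst ap_meas[OF ap]] borel_measurable_count_space]) simp
    have m2: "{p \<in> space (M \<Otimes>\<^sub>M lborel). 0 \<le> (snd p::real)} \<in> sets (M \<Otimes>\<^sub>M lborel)"
    proof -
      have "{p \<in> space (M \<Otimes>\<^sub>M lborel). 0 \<le> (snd p::real)} = space M \<times> {0..}"
        by (auto simp: space_pair_measure)
      moreover have "space M \<times> {0::real..} \<in> sets (M \<Otimes>\<^sub>M lborel)"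
        using borel_closed[OF closed_atLeast[of "0::real"]] by (intro pair_measureI sets.top) auto
      ultimately show ?thesis by simp
    qed
    show "F k \<in> borel_measurable (M \<Otimes>\<^sub>M lborel)"
      unfolding F_def by (rule measurable_If[OF m1 _ m2]) simp
  next
    show "(\<lambda>p. \<lceil>(snd p::real) * 2^m\<rceil>) \<in> (M \<Otimes>\<^sub>M lborel) \<rightarrow>\<^sub>M count_space UNIV"
      by (rule measurable_compose[OF _ measurable_real_ceiling]) measurable
  qed
  then show "(\<lambda>p. if 0 \<le> snd p then g (X (max 0 (real_of_int \<lceil>(snd p::real) * 2^m\<rceil> / 2^m)) (fst p)) else 0)
      \<in> borel_measurable (M \<Otimes>\<^sub>M lborel)" unfolding F_def by simp
next
  fix p :: "_ \<times> real" assume "p \<in> space (M \<Otimes>\<^sub>M lborel)"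
  then obtain \<omega> u where p: "p = (\<omega>, u)" "\<omega> \<in> space M" by (auto simp: space_pair_measure)
  show "(\<lambda>m. if 0 \<le> snd p then g (X (max 0 (real_of_int \<lceil>(snd p::real) * 2^m\<rceil> / 2^m)) (fst p)) else 0)
        \<longlonglongrightarrow> (if 0 \<le> snd p then g (X (snd p) (fst p)) else 0)"
  proof (cases "0 \<le> u")
    case False then show ?thesis using p by simp
  next
    case True
    obtain e where e: "e > 0" "\<And>v. u \<le> v \<Longrightarrow> v < u + e \<Longrightarrow> X v \<omega> = X u \<omega>"
      using ap_rcont[OF ap p(2)] True unfolding rcont_def by blast
    obtain N where N: "\<And>m. m \<ge> N \<Longrightarrow> u \<le> real_of_int \<lceil>u * 2^m\<rceil> / 2^m \<and> real_of_int \<lceil>u * 2^m\<rceil> / 2^m < u + e"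
      using ceil_approx[OF True e(1)] by blast
    have "\<forall>m\<ge>N. (if 0 \<le> snd p then g (X (max 0 (real_of_int \<lceil>(snd p::real) * 2^m\<rceil> / 2^m)) (fst p)) else 0)
        = (if 0 \<le> snd p then g (X (snd p) (fst p)) else 0)"
    proof (intro allI impI)
      fix m assume "m \<ge> N"
      then have "u \<le> real_of_int \<lceil>u * 2^m\<rceil> / 2^m" "real_of_int \<lceil>u * 2^m\<rceil> / 2^m < u + e" using N by auto
      moreover have "max 0 (real_of_int \<lceil>u * 2^m\<rceil> / 2^m) = real_of_int \<lceil>u * 2^m\<rceil> / 2^m"
        using calculation True by linarith
      moreover have "X (real_of_int \<lceil>u * 2^m\<rceil> / 2^m) \<omega> = X u \<omega>"
        using e(2)[of "real_of_int \<lceil>u * 2^m\<rceil> / 2^m"] calculation by blast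
      ultimately show "(if 0 \<le> snd p then g (X (max 0 (real_of_int \<lceil>(snd p::real) * 2^m\<rceil> / 2^m)) (fst p)) else 0)
        = (if 0 \<le> snd p then g (X (snd p) (fst p)) else 0)" using p by simp
    qed
    then show ?thesis by (intro tendsto_eventually eventually_sequentiallyI[of N]) blast
  qed
qed

definition hk :: "(st \<Rightarrow> nat) \<Rightarrow> st \<Rightarrow> real" where
  "hk k s = (if k s > 1 then real (k s) else 0)"

lemma Lfun_hk: "Lfun k X t \<omega> = (LINT u:{0..t}|lborel. hk k (X u \<omega>))"
  unfolding Lfun_def hk_def by simp

lemma Lfun_meas:
  assumes ap: "ancestral_process M lam \<rho> n X"
  shows "(\<lambda>\<omega>. Lfun k X t \<omega>) \<in> borel_measurable M"
proof -
  have j: "(\<lambda>p. if 0 \<le> snd p then hk k (X (snd p) (fst p)) else 0) \<in> borel_measurable (M \<Otimes>\<^sub>M lborel)"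
    by (rule joint_meas[OF ap])
  have "(\<lambda>p. indicator {0..t} (snd p) * (if 0 \<le> snd p then hk k (X (snd p) (fst p)) else 0)) \<in> borel_measurable (M \<Otimes>\<^sub>M lborel)"
    using j by measurable
  then have "(\<lambda>(\<omega>,u). indicator {0..t} u *\<^sub>R hk k (X u \<omega>)) \<in> borel_measurable (M \<Otimes>\<^sub>M lborel)"
    by (rule measurable_cong[THEN iffD1, rotated]) (auto simp: indicator_def split: split_indicator)
  then have "(\<lambda>\<omega>. integral\<^sup>L lborel (\<lambda>u. indicator {0..t} u *\<^sub>R hk k (X u \<omega>))) \<in> borel_measurable M"
    by (rule lborel.borel_measurable_lebesgue_integral)
  then show ?thesis unfolding Lfun_hk set_lebesgue_integral_def .
qed

lemma path_meas:
  fixes g :: "st \<Rightarrow> real"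
  assumes ap: "ancestral_process M lam \<rho> n X" and \<omega>: "\<omega> \<in> space M"
  shows "(\<lambda>u. if 0 \<le> u then g (X u \<omega>) else 0) \<in> borel_measurable lborel"
proof -
  have "(\<lambda>y. (\<lambda>p. if 0 \<le> snd p then g (X (snd p) (fst p)) else 0) (\<omega>, y)) \<in> borel_measurable lborel"
    by (rule measurable_Pair2[OF joint_meas[OF ap, of g] \<omega>])
  then show ?thesis unfolding fst_conv snd_conv .
qed

lemma hk_nonneg: "hk k s \<ge> 0" unfolding hk_def by simp
lemma hk_zero: "k s \<le> 1 \<Longrightarrow> hk k s = 0" unfolding hk_def by simp
lemma hk_ge2: "k s > 1 \<Longrightarrow> hk k s \<ge> 2" unfolding hk_def by simp

lemma hit_found:
  fixes x :: "real \<Rightarrow> st" and k :: "st \<Rightarrow> nat"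
  assumes rc: "rcont x" and ne: "\<exists>t\<ge>0. k (x t) \<le> 1"
  shows "\<exists>T\<ge>0. Inf {ereal t | t. 0 \<le> t \<and> k (x t) \<le> 1} = ereal T \<and> k (x T) \<le> 1
            \<and> (\<forall>t. 0 \<le> t \<and> t < T \<longrightarrow> 1 < k (x t))"
proof -
  define E where "E = {t. 0 \<le> t \<and> k (x t) \<le> 1}"
  define T where "T = Inf E"
  have Ene: "E \<noteq> {}" using ne unfolding E_def by auto
  have bdd: "bdd_below E" unfolding E_def by (rule bdd_belowI[of _ 0]) auto
  have low: "T \<le> t" if "t \<in> E" for t unfolding T_def by (rule cInf_lower[OF that bdd])
  have T0: "0 \<le> T" unfolding T_def by (rule cInf_greatest[OF Ene]) (auto simp: E_def)
  have kT: "k (x T) \<le> 1"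
  proof (rule ccontr)
    assume nk: "\<not> k (x T) \<le> 1"
    obtain e where e: "e > 0" "\<And>u. T \<le> u \<Longrightarrow> u < T + e \<Longrightarrow> x u = x T"
      using rc T0 unfolding rcont_def by blast
    have "T + e \<le> t" if t: "t \<in> E" for t
    proof (rule ccontr)
      assume "\<not> T + e \<le> t"
      then have "x t = x T" using e(2)[of t] low[OF t] by simp
      then show False using t nk unfolding E_def by simp
    qed
    then have "T + e \<le> T" unfolding T_def[of] by (intro cInf_greatest[OF Ene]) (auto simp: T_def)
    then show False using e by simp
  qed
  have TE: "T \<in> E" using T0 kT unfolding E_def by simp
  have set: "{ereal t | t. 0 \<le> t \<and> k (x t) \<le> 1} = ereal ` E" unfolding E_def by auto
  have "Inf (ereal ` E) = ereal T"
  proof (rule antisym)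
    show "Inf (ereal ` E) \<le> ereal T" using TE by (intro Inf_lower) auto
    show "ereal T \<le> Inf (ereal ` E)" using low by (intro Inf_greatest) auto
  qed
  moreover have "\<forall>t. 0 \<le> t \<and> t < T \<longrightarrow> 1 < k (x t)"
  proof (intro allI impI)
    fix t assume t: "0 \<le> t \<and> t < T"
    show "1 < k (x t)"
    proof (rule ccontr)
      assume "\<not> 1 < k (x t)"
      then have "t \<in> E" using t unfolding E_def by simp
      then show False using low t by fastforce
    qed
  qed
  ultimately show ?thesis using T0 kT set by auto
qed

lemma hit_none:
  fixes x :: "real \<Rightarrow> st" and k :: "st \<Rightarrow> nat"
  assumes "\<not> (\<exists>t\<ge>0. k (x t) \<le> 1)"
  shows "Inf {ereal t | t. 0 \<le> t \<and> k (x t) \<le> 1} = \<infinity>"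
proof -
  have e: "{ereal t | t. 0 \<le> t \<and> k (x t) \<le> 1} = {}" using assms by auto
  show ?thesis unfolding e by (simp add: top_ereal_def)
qed

context
  fixes M :: "'w measure" and lam :: "real \<Rightarrow> real" and \<rho> :: real and n :: nat
    and X :: "real \<Rightarrow> 'w \<Rightarrow> st" and \<omega> :: 'w and k :: "st \<Rightarrow> nat"
  assumes ap: "ancestral_process M lam \<rho> n X" and \<omega>: "\<omega> \<in> space M"
begin

lemma path_int:
  assumes a: "0 \<le> a"
  shows "set_integrable lborel {a..b} (\<lambda>u. hk k (X u \<omega>))"
proof -
  define B where "B = Max (hk k ` state_space n)"
  have "integrable lborel (\<lambda>u. indicator {a..b} u *\<^sub>R (if 0 \<le> u then hk k (X u \<omega>) else 0))"
  proof (rule integrableI_bounded_set_indicator[where B=B])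
    show "{a..b} \<in> sets lborel" by simp
    show "(\<lambda>u. if 0 \<le> u then hk k (X u \<omega>) else 0) \<in> borel_measurable lborel"
      by (rule path_meas[OF ap \<omega>])
    show "emeasure lborel {a..b} < \<infinity>" by (simp add: emeasure_lborel_Icc_eq)
    show "AE x\<in>{a..b} in lborel. norm (if 0 \<le> x then hk k (X x \<omega>) else 0) \<le> B"
    proof (rule AE_I2, rule impI)
      fix x :: real assume "x \<in> {a..b}"
      then have x: "0 \<le> x" using a by simp
      have "X x \<omega> \<in> state_space n" by (rule ap_in[OF ap \<omega> x])
      then have "hk k (X x \<omega>) \<le> B" unfolding B_def
        using finite_state_space by (intro Max_ge) auto
      then show "norm (if 0 \<le> x then hk k (X x \<omega>) else 0) \<le> B" using x hk_nonneg[of k] by simp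
    qed
  qed
  moreover have "(\<lambda>u. indicator {a..b} u *\<^sub>R (if 0 \<le> u then hk k (X u \<omega>) else 0))
       = (\<lambda>u. indicator {a..b} u *\<^sub>R hk k (X u \<omega>))"
    using a by (auto simp: indicator_def)
  ultimately show ?thesis unfolding set_integrable_def by simp
qed

lemma L_split:
  assumes "0 \<le> a" "a \<le> b"
  shows "Lfun k X b \<omega> = Lfun k X a \<omega> + (LINT u:{a<..b}|lborel. hk k (X u \<omega>))"
proof -
  have un: "{0..b} = {0..a} \<union> {a<..b}" using assms by auto
  have i1: "set_integrable lborel {0..a} (\<lambda>u. hk k (X u \<omega>))" by (rule path_int) simp
  have i2: "set_integrable lborel {a<..b} (\<lambda>u. hk k (X u \<omega>))"
    by (rule set_integrable_subset[OF path_int[OF assms(1), of b]]) auto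
  show ?thesis unfolding Lfun_hk un
    by (rule set_integral_Un[OF _ i1 i2]) auto
qed

lemma Lint_nonneg: "0 \<le> (LINT u:A|lborel. hk k (X u \<omega>))"
  unfolding set_lebesgue_integral_def
  by (rule Bochner_Integration.integral_nonneg) (auto simp: hk_nonneg indicator_def)

lemma L_nonneg: "0 \<le> Lfun k X t \<omega>"
  unfolding Lfun_hk by (rule Lint_nonneg)

lemma L_mono: "0 \<le> a \<Longrightarrow> a \<le> b \<Longrightarrow> Lfun k X a \<omega> \<le> Lfun k X b \<omega>"
  using L_split Lint_nonneg by (metis le_add_same_cancel1)

lemma L_flat:
  assumes "0 \<le> a" "a \<le> b" and z: "\<And>u. a < u \<Longrightarrow> u \<le> b \<Longrightarrow> k (X u \<omega>) \<le> 1"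
  shows "Lfun k X b \<omega> = Lfun k X a \<omega>"
proof -
  have "(LINT u:{a<..b}|lborel. hk k (X u \<omega>)) = (LINT u:{a<..b}|lborel. 0)"
    by (rule set_lebesgue_integral_cong) (auto intro!: hk_zero z)
  then show ?thesis using L_split[OF assms(1,2)] by (simp add: set_lebesgue_integral_def)
qed

lemma L_lower:
  assumes t: "0 \<le> t" and big: "\<And>u. 0 \<le> u \<Longrightarrow> u \<le> t \<Longrightarrow> 1 < k (X u \<omega>)"
  shows "2 * t \<le> Lfun k X t \<omega>"
proof -
  have hb: "has_bochner_integral lborel (\<lambda>u. indicator {0..t} u *\<^sub>R (2::real)) (measure lborel {0..t} *\<^sub>R 2)"
    by (rule has_bochner_integral_indicator) (auto simp: emeasure_lborel_Icc_eq)
  have "integral\<^sup>L lborel (\<lambda>u. indicator {0..t} u *\<^sub>R (2::real)) \<le> integral\<^sup>L lborel (\<lambda>u. indicator {0..t} u *\<^sub>R hk k (X u \<omega>))"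
  proof (rule integral_mono)
    show "integrable lborel (\<lambda>u. indicator {0..t} u *\<^sub>R (2::real))"
      using hb by (rule integrable.intros)
    show "integrable lborel (\<lambda>u. indicator {0..t} u *\<^sub>R hk k (X u \<omega>))"
      using path_int[of 0 t] unfolding set_integrable_def by simp
    fix u :: real
    show "indicator {0..t} u *\<^sub>R (2::real) \<le> indicator {0..t} u *\<^sub>R hk k (X u \<omega>)"
      using big[of u] hk_ge2[of k "X u \<omega>"] by (auto simp: indicator_def)
  qed
  moreover have "integral\<^sup>L lborel (\<lambda>u. indicator {0..t} u *\<^sub>R (2::real)) = 2 * t"
    using has_bochner_integral_integral_eq[OF hb] t by (simp add: measure_lborel_Icc)
  ultimately show ?thesis unfolding Lfun_hk set_lebesgue_integral_def by simp
qed

lemma hit_char: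
  assumes "\<exists>t\<ge>0. k (X t \<omega>) \<le> 1"
  shows "\<exists>T\<ge>0. hit k X \<omega> = ereal T \<and> k (X T \<omega>) \<le> 1 \<and> (\<forall>t. 0 \<le> t \<and> t < T \<longrightarrow> 1 < k (X t \<omega>))
      \<and> Ltot k X \<omega> = ereal (Lfun k X T \<omega>)"
proof -
  obtain T where T: "T \<ge> 0" "Inf {ereal t | t. 0 \<le> t \<and> k (X t \<omega>) \<le> 1} = ereal T" "k (X T \<omega>) \<le> 1"
     "\<forall>t. 0 \<le> t \<and> t < T \<longrightarrow> 1 < k (X t \<omega>)"
    using hit_found[OF ap_rcont[OF ap \<omega>], of k] assms by auto
  then have h: "hit k X \<omega> = ereal T" unfolding hit_def by simp
  then have "Ltot k X \<omega> = ereal (Lfun k X T \<omega>)" unfolding Ltot_def by simp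
  then show ?thesis using T h by blast
qed

lemma P1:
  assumes le: "Ltot k X \<omega> \<le> ereal z"
  shows "\<exists>T\<ge>0. k (X T \<omega>) \<le> 1 \<and> Lfun k X T \<omega> \<le> z \<and> 2 * T \<le> z
          \<and> Ltot k X \<omega> = ereal (Lfun k X T \<omega>)"
proof (cases "\<exists>t\<ge>0. k (X t \<omega>) \<le> 1")
  case False
  then have "hit k X \<omega> = \<infinity>" unfolding hit_def by (rule hit_none)
  then have Lt: "Ltot k X \<omega> = (SUP t\<in>{0..}. ereal (Lfun k X t \<omega>))" unfolding Ltot_def by simp
  define t where "t = \<bar>z\<bar> / 2 + 1"
  have t0: "0 \<le> t" unfolding t_def by simp
  have "2 * t \<le> Lfun k X t \<omega>" using False by (intro L_lower t0) auto
  moreover have "ereal (Lfun k X t \<omega>) \<le> Ltot k X \<omega>" unfolding Lt using t0 by (intro SUP_upper) auto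
  ultimately have "2 * t \<le> z" using le by (metis ereal_less_eq(3) order_trans)
  then show ?thesis unfolding t_def by simp
next
  case True
  obtain T where T: "T \<ge> 0" "k (X T \<omega>) \<le> 1" "\<forall>t. 0 \<le> t \<and> t < T \<longrightarrow> 1 < k (X t \<omega>)"
     "Ltot k X \<omega> = ereal (Lfun k X T \<omega>)"
    using hit_char[OF True] by blast
  have LT: "Lfun k X T \<omega> \<le> z" using le T(4) by simp
  have z0: "0 \<le> z" using LT L_nonneg[of T] by simp
  have "2 * T \<le> z"
  proof (rule ccontr)
    assume "\<not> 2 * T \<le> z"
    define t' where "t' = (T + z / 2) / 2"
    have t'0: "0 \<le> t'" "t' < T" "z < 2 * t'" using \<open>\<not> 2 * T \<le> z\<close> z0 T(1) unfolding t'_def by auto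
    have "2 * t' \<le> Lfun k X t' \<omega>" using T(3) t'0 by (intro L_lower) auto
    moreover have "Lfun k X t' \<omega> \<le> Lfun k X T \<omega>" using t'0 by (intro L_mono) auto
    ultimately show False using LT t'0 by simp
  qed
  then show ?thesis using T LT by blast
qed

lemma P2:
  assumes t: "0 \<le> t" and kt: "k (X t \<omega>) \<le> 1"
  shows "Ltot k X \<omega> \<le> ereal (Lfun k X t \<omega>)"
proof -
  obtain T where T: "T \<ge> 0" "\<forall>t. 0 \<le> t \<and> t < T \<longrightarrow> 1 < k (X t \<omega>)"
     "Ltot k X \<omega> = ereal (Lfun k X T \<omega>)"
    using hit_char[of] t kt by blast
  have "T \<le> t" using T(2) t kt by force
  then have "Lfun k X T \<omega> \<le> Lfun k X t \<omega>" using T(1) by (intro L_mono)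
  then show ?thesis using T(3) by simp
qed

lemma P3:
  "Ltot k X \<omega> \<le> ereal z \<longleftrightarrow>
    (\<forall>m::nat. \<exists>q::rat. 0 \<le> real_of_rat q \<and> k (X (real_of_rat q) \<omega>) \<le> 1
        \<and> Lfun k X (real_of_rat q) \<omega> \<le> z + 1 / real (Suc m))"
proof
  assume le: "Ltot k X \<omega> \<le> ereal z"
  obtain T where T: "T \<ge> 0" "k (X T \<omega>) \<le> 1" "Lfun k X T \<omega> \<le> z"
    using P1[OF le] by blast
  obtain e where e: "e > 0" "\<And>u. T \<le> u \<Longrightarrow> u < T + e \<Longrightarrow> X u \<omega> = X T \<omega>"
    using ap_rcont[OF ap \<omega>] T(1) unfolding rcont_def by blast
  obtain r where r: "r \<in> \<rat>" "T < r" "r < T + e" using Rats_dense_in_real[of T "T + e"] e(1) by auto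
  have "Lfun k X r \<omega> = Lfun k X T \<omega>"
  proof (rule L_flat)
    show "0 \<le> T" "T \<le> r" using T r by auto
    fix u assume "T < u" "u \<le> r"
    then have "X u \<omega> = X T \<omega>" using e(2)[of u] r by simp
    then show "k (X u \<omega>) \<le> 1" using T(2) by simp
  qed
  moreover have "X r \<omega> = X T \<omega>" using e(2)[of r] r by simp
  moreover obtain q where q: "r = real_of_rat q" using r(1) by (auto elim: Rats_cases)
  moreover have q0: "0 \<le> real_of_rat q" using q r T(1) by linarith
  ultimately have "0 \<le> real_of_rat q \<and> k (X (real_of_rat q) \<omega>) \<le> 1 \<and> Lfun k X (real_of_rat q) \<omega> \<le> z + 1 / real (Suc m)" for m
    using T r by (auto simp: add_increasing2)
  then show "\<forall>m::nat. \<exists>q::rat. 0 \<le> real_of_rat q \<and> k (X (real_of_rat q) \<omega>) \<le> 1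
        \<and> Lfun k X (real_of_rat q) \<omega> \<le> z + 1 / real (Suc m)" by blast
next
  assume H: "\<forall>m::nat. \<exists>q::rat. 0 \<le> real_of_rat q \<and> k (X (real_of_rat q) \<omega>) \<le> 1
        \<and> Lfun k X (real_of_rat q) \<omega> \<le> z + 1 / real (Suc m)"
  have bound: "Ltot k X \<omega> \<le> ereal (z + 1 / real (Suc m))" for m
  proof -
    obtain q where q: "0 \<le> real_of_rat q" "k (X (real_of_rat q) \<omega>) \<le> 1"
        "Lfun k X (real_of_rat q) \<omega> \<le> z + 1 / real (Suc m)" using H by blast
    have "Ltot k X \<omega> \<le> ereal (Lfun k X (real_of_rat q) \<omega>)" by (rule P2[OF q(1,2)])
    also have "\<dots> \<le> ereal (z + 1 / real (Suc m))" using q(3) by simp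
    finally show ?thesis .
  qed
  obtain q where q: "0 \<le> real_of_rat q" "k (X (real_of_rat q) \<omega>) \<le> 1" using H by blast
  obtain T where T: "Ltot k X \<omega> = ereal (Lfun k X T \<omega>)"
    using hit_char q by blast
  have "Lfun k X T \<omega> \<le> z"
  proof (rule ccontr)
    assume "\<not> Lfun k X T \<omega> \<le> z"
    then obtain m where m: "m > 0" "inverse (real m) < Lfun k X T \<omega> - z"
      using ex_inverse_of_nat_less[of "Lfun k X T \<omega> - z"] by auto
    have "Lfun k X T \<omega> \<le> z + 1 / real (Suc m)" using bound[of m] T by simp
    moreover have "1 / real (Suc m) \<le> inverse (real m)" using m(1)
      by (simp add: inverse_eq_divide frac_le)
    ultimately show False using m(2) by linarith
  qed
  then show "Ltot k X \<omega> \<le> ereal z" using T by simp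
qed

end

lemma CA_states: "s \<in> state_space n \<Longrightarrow> kA s \<le> 1 \<Longrightarrow> s \<in> {(1,0,0,0),(1,0,0,1),(1,0,1,1)}"
  unfolding state_space_def kA_def by auto

lemma CB_states: "s \<in> state_space n \<Longrightarrow> kB s \<le> 1 \<Longrightarrow> s \<in> {(1,0,0,0),(1,0,0,1),(1,1,0,1)}"
  unfolding state_space_def kB_def by auto

lemma Delta_states: "s \<in> state_space n \<Longrightarrow> kA s \<le> 1 \<Longrightarrow> kB s \<le> 1 \<Longrightarrow> s \<in> Delta"
  unfolding state_space_def kA_def kB_def Delta_def by auto

lemma Delta_k: "s \<in> Delta \<Longrightarrow> kA s \<le> 1 \<and> kB s \<le> 1"
  unfolding Delta_def kA_def kB_def by auto

lemma off_1011: "offdiag_rate lam \<rho> t (1,0,1,1) j = (if j = (1,0,0,1) then lam t else 0)"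
  unfolding offdiag_rate_def coal_rate_def rec_rate_def Delta_def by auto

lemma off_1101: "offdiag_rate lam \<rho> t (1,1,0,1) j = (if j = (1,0,0,1) then lam t else 0)"
  unfolding offdiag_rate_def coal_rate_def rec_rate_def Delta_def by auto

lemma off_Delta: "s \<in> Delta \<Longrightarrow> offdiag_rate lam \<rho> t s j = 0"
  unfolding offdiag_rate_def by simp

lemma n1001: "n \<ge> 2 \<Longrightarrow> (1,0,0,1) \<in> state_space n"
  unfolding state_space_def by auto

lemma clA:
  assumes n: "n \<ge> 2" and k: "k \<in> {s \<in> state_space n. kA s \<le> 1}"
    and j: "j \<in> state_space n - {s \<in> state_space n. kA s \<le> 1}"
  shows "offdiag_rate lam \<rho> t k j = 0"
proof -
  have jn: "j \<noteq> (1,0,0,1)" using j n1001[OF n] by (auto simp: kA_def)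
  have "k \<in> {(1,0,0,0),(1,0,0,1),(1,0,1,1)}" using k CA_states by blast
  then show ?thesis
  proof (elim insertE)
    assume "k = (1,0,1,1)" then show ?thesis using jn off_1011 by simp
  qed (auto intro: off_Delta simp: Delta_def)
qed

lemma clB:
  assumes n: "n \<ge> 2" and k: "k \<in> {s \<in> state_space n. kB s \<le> 1}"
    and j: "j \<in> state_space n - {s \<in> state_space n. kB s \<le> 1}"
  shows "offdiag_rate lam \<rho> t k j = 0"
proof -
  have jn: "j \<noteq> (1,0,0,1)" using j n1001[OF n] by (auto simp: kB_def)
  have "k \<in> {(1,0,0,0),(1,0,0,1),(1,1,0,1)}" using k CB_states by blast
  then show ?thesis
  proof (elim insertE)
    assume "k = (1,1,0,1)" then show ?thesis using jn off_1101 by simp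
  qed (auto intro: off_Delta simp: Delta_def)
qed

lemma pred_le_real: "f \<in> borel_measurable M \<Longrightarrow> Measurable.pred M (\<lambda>\<omega>. f \<omega> \<le> (c::real))"
  unfolding pred_def using borel_measurable_iff_le by blast

lemma pred_guard: "(0 \<le> c \<Longrightarrow> Measurable.pred M P) \<Longrightarrow> Measurable.pred M (\<lambda>\<omega>. 0 \<le> (c::real) \<and> P \<omega>)"
  by (cases "0 \<le> c") simp_all

lemma Phi_pred:
  assumes ap: "ancestral_process M lam \<rho> n X"
  shows "Measurable.pred M (\<lambda>\<omega>. \<forall>m::nat. \<exists>q::rat. 0 \<le> real_of_rat q \<and> k (X (real_of_rat q) \<omega>) \<le> 1
        \<and> Lfun k X (real_of_rat q) \<omega> \<le> z + 1 / real (Suc m))"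
proof (intro pred_intros_countable)
  fix m :: nat and q :: rat
  show "Measurable.pred M (\<lambda>\<omega>. 0 \<le> real_of_rat q \<and> k (X (real_of_rat q) \<omega>) \<le> 1
        \<and> Lfun k X (real_of_rat q) \<omega> \<le> z + 1 / real (Suc m))"
  proof (rule pred_guard)
    assume q: "0 \<le> real_of_rat q"
    show "Measurable.pred M (\<lambda>\<omega>. k (X (real_of_rat q) \<omega>) \<le> 1 \<and> Lfun k X (real_of_rat q) \<omega> \<le> z + 1 / real (Suc m))"
      by (rule pred_intros_logic(3)[OF ap_pred[OF ap q] pred_le_real[OF Lfun_meas[OF ap]]])
  qed
qed

theorem lemma2:
  fixes M :: "'w measure" and X :: "real \<Rightarrow> 'w \<Rightarrow> st" and lam :: "real \<Rightarrow> real"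
    and n :: nat and \<rho> x y tbar :: real
  assumes "prob_space M"
    and "continuous_on {0..} lam" and "\<forall>t\<ge>0. lam t > 0"
    and "n \<ge> 2" and "\<rho> > 0"
    and "ancestral_process M lam \<rho> n X"
    and "x \<ge> 0" and "y \<ge> 0" and "tbar \<ge> max x y / 2"
  shows "measure M {\<omega>\<in>space M. Ltot kA X \<omega> \<le> ereal x \<and> Ltot kB X \<omega> \<le> ereal y}
           = measure M {\<omega>\<in>space M. X tbar \<omega> \<in> Delta \<and> Lfun kA X tbar \<omega> \<le> x \<and> Lfun kB X tbar \<omega> \<le> y}
       \<and> measure M {\<omega>\<in>space M. X tbar \<omega> \<in> Delta \<and> Lfun kA X tbar \<omega> \<le> x \<and> Lfun kB X tbar \<omega> \<le> y}
           = Fs M X (1,0,0,0) tbar x y + Fs M X (1,0,0,1) tbar x y"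
proof -
  note prob = assms(1) and lam = assms(3) and n2 = assms(4) and rho = assms(5) and ap = assms(6)
  have n1: "n \<ge> 1" using n2 by simp
  have tb0: "0 \<le> tbar" using assms(7-9) by simp
  have txA: "x / 2 \<le> tbar" and txB: "y / 2 \<le> tbar" using assms(9) by auto
  define CA where "CA = {s \<in> state_space n. kA s \<le> 1}"
  define CB where "CB = {s \<in> state_space n. kB s \<le> 1}"
  have AEA: "AE \<omega> in M. \<forall>a b. 0 \<le> a \<longrightarrow> a \<le> b \<longrightarrow> X a \<omega> \<in> CA \<longrightarrow> X b \<omega> \<in> CA"
    by (rule ap_closed_AE[OF ap prob n1 lam rho]) (auto simp: CA_def intro: clA[OF n2])
  have AEB: "AE \<omega> in M. \<forall>a b. 0 \<le> a \<longrightarrow> a \<le> b \<longrightarrow> X a \<omega> \<in> CB \<longrightarrow> X b \<omega> \<in> CB"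
    by (rule ap_closed_AE[OF ap prob n1 lam rho]) (auto simp: CB_def intro: clB[OF n2])
  define A where "A = {\<omega>\<in>space M. Ltot kA X \<omega> \<le> ereal x \<and> Ltot kB X \<omega> \<le> ereal y}"
  define B where "B = {\<omega>\<in>space M. X tbar \<omega> \<in> Delta \<and> Lfun kA X tbar \<omega> \<le> x \<and> Lfun kB X tbar \<omega> \<le> y}"
  define B1 where "B1 = {\<omega>\<in>space M. X tbar \<omega> = (1,0,0,0) \<and> Lfun kA X tbar \<omega> \<le> x \<and> Lfun kB X tbar \<omega> \<le> y}"
  define B2 where "B2 = {\<omega>\<in>space M. X tbar \<omega> = (1,0,0,1) \<and> Lfun kA X tbar \<omega> \<le> x \<and> Lfun kB X tbar \<omega> \<le> y}"
  have predL: "Measurable.pred M (\<lambda>\<omega>. Lfun kA X tbar \<omega> \<le> x \<and> Lfun kB X tbar \<omega> \<le> y)"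
    by (rule pred_intros_logic(3)[OF pred_le_real[OF Lfun_meas[OF ap]] pred_le_real[OF Lfun_meas[OF ap]]])
  have gsets: "{\<omega>\<in>space M. Q (X tbar \<omega>) \<and> Lfun kA X tbar \<omega> \<le> x \<and> Lfun kB X tbar \<omega> \<le> y} \<in> sets M" for Q
    by (rule predE, rule pred_intros_logic(3)[OF ap_pred[OF ap tb0] predL])
  have Bsets: "B \<in> sets M" unfolding B_def by (rule gsets)
  have B1sets: "B1 \<in> sets M" unfolding B1_def by (rule gsets)
  have B2sets: "B2 \<in> sets M" unfolding B2_def by (rule gsets)
  have Aeq: "A = {\<omega>\<in>space M. (\<forall>m::nat. \<exists>q::rat. 0 \<le> real_of_rat q \<and> kA (X (real_of_rat q) \<omega>) \<le> 1
        \<and> Lfun kA X (real_of_rat q) \<omega> \<le> x + 1 / real (Suc m)) \<and>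
        (\<forall>m::nat. \<exists>q::rat. 0 \<le> real_of_rat q \<and> kB (X (real_of_rat q) \<omega>) \<le> 1
        \<and> Lfun kB X (real_of_rat q) \<omega> \<le> y + 1 / real (Suc m))}"
    unfolding A_def using P3[OF ap] by blast
  have Asets: "A \<in> sets M" unfolding Aeq
    by (rule predE, rule pred_intros_logic(3)[OF Phi_pred[OF ap] Phi_pred[OF ap]])
  have AEeq: "AE \<omega> in M. \<omega> \<in> A \<longleftrightarrow> \<omega> \<in> B"
    using AEA AEB AE_space
  proof eventually_elim
    case (elim \<omega>)
    have \<omega>: "\<omega> \<in> space M" by (rule elim(3))
    show ?case
    proof
      assume "\<omega> \<in> A"
      then have LA: "Ltot kA X \<omega> \<le> ereal x" and LB: "Ltot kB X \<omega> \<le> ereal y" unfolding A_def by auto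
      obtain TA where TA: "TA \<ge> 0" "kA (X TA \<omega>) \<le> 1" "Lfun kA X TA \<omega> \<le> x" "2 * TA \<le> x"
        using P1[OF ap \<omega> LA] by blast
      obtain TB where TB: "TB \<ge> 0" "kB (X TB \<omega>) \<le> 1" "Lfun kB X TB \<omega> \<le> y" "2 * TB \<le> y"
        using P1[OF ap \<omega> LB] by blast
      have TAt: "TA \<le> tbar" using TA txA by simp
      have TBt: "TB \<le> tbar" using TB txB by simp
      have inA: "X u \<omega> \<in> CA" if "TA \<le> u" for u
        using elim(1) TA(1) that ap_in[OF ap \<omega> TA(1)] TA(2) unfolding CA_def by blast
      have inB: "X u \<omega> \<in> CB" if "TB \<le> u" for u
        using elim(2) TB(1) that ap_in[OF ap \<omega> TB(1)] TB(2) unfolding CB_def by blast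
      have "Lfun kA X tbar \<omega> = Lfun kA X TA \<omega>"
        using inA TA(1) TAt by (intro L_flat[OF ap \<omega>]) (auto simp: CA_def)
      moreover have "Lfun kB X tbar \<omega> = Lfun kB X TB \<omega>"
        using inB TB(1) TBt by (intro L_flat[OF ap \<omega>]) (auto simp: CB_def)
      moreover have "X tbar \<omega> \<in> Delta"
        using inA[OF TAt] inB[OF TBt] Delta_states unfolding CA_def CB_def by blast
      ultimately show "\<omega> \<in> B" unfolding B_def using \<omega> TA TB by simp
    next
      assume "\<omega> \<in> B"
      then have D: "X tbar \<omega> \<in> Delta" and lx: "Lfun kA X tbar \<omega> \<le> x" and ly: "Lfun kB X tbar \<omega> \<le> y"
        unfolding B_def by auto
      have "Ltot kA X \<omega> \<le> ereal (Lfun kA X tbar \<omega>)"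
        using Delta_k[OF D] by (intro P2[OF ap \<omega> tb0]) simp
      also have "\<dots> \<le> ereal x" using lx by simp
      finally have a: "Ltot kA X \<omega> \<le> ereal x" .
      have "Ltot kB X \<omega> \<le> ereal (Lfun kB X tbar \<omega>)"
        using Delta_k[OF D] by (intro P2[OF ap \<omega> tb0]) simp
      also have "\<dots> \<le> ereal y" using ly by simp
      finally have b: "Ltot kB X \<omega> \<le> ereal y" .
      show "\<omega> \<in> A" unfolding A_def using \<omega> a b by simp
    qed
  qed
  have 1: "measure M A = measure M B" by (rule measure_eq_AE[OF AEeq Asets Bsets])
  have "B = B1 \<union> B2" unfolding B_def B1_def B2_def Delta_def by auto
  moreover have "B1 \<inter> B2 = {}" unfolding B1_def B2_def by auto
  ultimately have 2: "measure M B = measure M B1 + measure M B2"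
    using finite_measure.finite_measure_Union[OF prob_space.finite_measure[OF prob] B1sets B2sets] by simp
  show ?thesis using 1 2 unfolding A_def B_def B1_def B2_def Fs_def by simp
qed

end
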